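(* For every $b\in[0,1]$ define functions $G^n_b\colon[0,1]^n\to[0,1]$ inductively by $G^1_b(x_0)=\mathsf{Med}_b(\chi_0(x_0),\chi_1(x_0))$, $G^2_b(x_0,x_1)=\mathsf{Med}_b(\chi_0(x_0\vee x_1),\chi_1(x_0\wedge x_1))$, and $G^{n+1}_b(x_0,\dots,x_n)=G^2_b(G^n_b(x_0,\dots,x_{n-1}),x_n)$ for $n\ge2$. Then for every $n\in\mathbb{N}$ and $b\in[0,1]$, $G^n_b$ is an aggregation function and for $\mathbf{x}\in[0,1]^n$: $G^n_b(\mathbf{x})=0$ if $\mathbf{x}=(0,\dots,0)$, $G^n_b(\mathbf{x})=1$ if $\mathbf{x}=(1,\dots,1)$, and $G^n_b(\mathbf{x})=b$ otherwise.
   Context: An $n$-ary aggregation function on $[0,1]$ is a function $f\colon[0,1]^n\to[0,1]$ nondecreasing in each coordinate with $f(0,\dots,0)=0$ and $f(1,\dots,1)=1$. For $a\in[0,1]$, $\chi_a\colon[0,1]\to[0,1]$ is given by $\chi_a(x)=1$ if $x\ge a$ and $x\neq0$, and $\chi_a(x)=0$ otherwise. $\mathsf{Med}_b(x,y)$ is the median of $x,y,b$. $\vee,\wedge$ denote max and min. *)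

theory Defs
  imports Complex_Main
begin

text \<open>Points of [0,1]^n are represented as functions nat => real; only the
  coordinates 0..n-1 are relevant.\<close>

definition unit_cube :: "nat \<Rightarrow> (nat \<Rightarrow> real) set" where
  "unit_cube n = {x. \<forall>i<n. 0 \<le> x i \<and> x i \<le> 1}"

definition aggregation_function :: "nat \<Rightarrow> ((nat \<Rightarrow> real) \<Rightarrow> real) \<Rightarrow> bool" where
  "aggregation_function n f \<longleftrightarrow>
     (\<forall>x\<in>unit_cube n. 0 \<le> f x \<and> f x \<le> 1) \<and>
     (\<forall>x\<in>unit_cube n. \<forall>y\<in>unit_cube n. (\<forall>i<n. x i \<le> y i) \<longrightarrow> f x \<le> f y) \<and>
     f (\<lambda>_. 0) = 0 \<and> f (\<lambda>_. 1) = 1"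

definition chi :: "real \<Rightarrow> real \<Rightarrow> real" where
  "chi a x = (if x \<ge> a \<and> x \<noteq> 0 then 1 else 0)"

definition Med :: "real \<Rightarrow> real \<Rightarrow> real \<Rightarrow> real" where
  "Med b x y = max (min x y) (min (max x y) b)"

definition G2 :: "real \<Rightarrow> real \<Rightarrow> real \<Rightarrow> real" where
  "G2 b x0 x1 = Med b (chi 0 (max x0 x1)) (chi 1 (min x0 x1))"

fun G :: "real \<Rightarrow> nat \<Rightarrow> (nat \<Rightarrow> real) \<Rightarrow> real" where
  "G b 0 x = 0"   \<comment> \<open>junk value; G^0 is not considered\<close>
| "G b (Suc 0) x = Med b (chi 0 (x 0)) (chi 1 (x 0))"
| "G b (Suc (Suc 0)) x = G2 b (x 0) (x 1)"
| "G b (Suc (Suc (Suc n))) x = G2 b (G b (Suc (Suc n)) x) (x (Suc (Suc n)))"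

end

theory Submission
  imports Defs
begin

lemma G2_val:
  assumes "0 \<le> u" "u \<le> 1" "0 \<le> v" "v \<le> 1" "0 \<le> b" "b \<le> 1"
  shows "G2 b u v = (if u = 0 \<and> v = 0 then 0 else if u = 1 \<and> v = 1 then 1 else b)"
  using assms unfolding G2_def Med_def chi_def by (auto simp: max_def min_def)

lemma G_val:
  assumes "1 \<le> n" "0 \<le> b" "b \<le> 1" "x \<in> unit_cube n"
  shows "G b n x = (if (\<forall>i<n. x i = 0) then 0
                       else if (\<forall>i<n. x i = 1) then 1 else b)"
  using assms
proof (induction b n x rule: G.induct)
  case (1 b x)
  then show ?case by simp
next
  case (2 b x)
  then show ?case unfolding unit_cube_def by (auto simp: Med_def chi_def max_def min_def)
next
  case (3 b x)
  have "0 \<le> x 0" "x 0 \<le> 1" "0 \<le> x 1" "x 1 \<le> 1" using 3 unfolding unit_cube_def by auto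
  then have e: "G b 2 x = (if x 0 = 0 \<and> x 1 = 0 then 0 else if x 0 = 1 \<and> x 1 = 1 then 1 else b)"
    using G2_val 3 by (simp add: numeral_2_eq_2)
  have a: "(\<forall>i<2. x i = (c::real)) = (x 0 = c \<and> x 1 = c)" for c
    by (auto simp: less_2_cases_iff)
  show ?case using e a by (simp add: numeral_2_eq_2)
next
  case (4 b n x)
  let ?m = "Suc (Suc n)"
  have cube: "x \<in> unit_cube ?m" using 4 unfolding unit_cube_def by auto
  have IH: "G b ?m x = (if (\<forall>i<?m. x i = 0) then 0 else if (\<forall>i<?m. x i = 1) then 1 else b)"
    using 4 cube by simp
  have xv: "0 \<le> x ?m" "x ?m \<le> 1" using 4 unfolding unit_cube_def by auto
  have u: "0 \<le> G b ?m x" "G b ?m x \<le> 1" using IH 4 by auto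
  have split: "(\<forall>i<Suc ?m. P i) = ((\<forall>i<?m. P i) \<and> P ?m)" for P
    using less_Suc_eq by auto
  have "G b (Suc ?m) x = G2 b (G b ?m x) (x ?m)" by simp
  also have "\<dots> = (if G b ?m x = 0 \<and> x ?m = 0 then 0 else if G b ?m x = 1 \<and> x ?m = 1 then 1 else b)"
    using G2_val u xv 4 by blast
  finally show ?case unfolding split using IH
    by (cases "b = 0"; cases "b = 1"; auto)
qed

theorem lemma1:
  fixes n :: nat and b :: real
  assumes "1 \<le> n" and "0 \<le> b" and "b \<le> 1"
  shows "aggregation_function n (G b n) \<and>
         (\<forall>x\<in>unit_cube n.
            G b n x = (if (\<forall>i<n. x i = 0) then 0
                       else if (\<forall>i<n. x i = 1) then 1 else b))"
proof -
  have V: "\<And>x. x \<in> unit_cube n \<Longrightarrow> G b n x = (if (\<forall>i<n. x i = 0) then 0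
                       else if (\<forall>i<n. x i = 1) then 1 else b)"
    using G_val assms by blast
  have c0: "(\<lambda>_. 0) \<in> unit_cube n" and c1: "(\<lambda>_. 1) \<in> unit_cube n"
    unfolding unit_cube_def by auto
  have ex: "\<exists>i<n. True" using assms by (intro exI[of _ 0]) auto
  have mono: "G b n x \<le> G b n y" if x: "x \<in> unit_cube n" and y: "y \<in> unit_cube n"
    and le: "\<forall>i<n. x i \<le> y i" for x y
  proof -
    have "\<forall>i<n. 0 \<le> x i \<and> x i \<le> 1" "\<forall>i<n. 0 \<le> y i \<and> y i \<le> 1"
      using x y unfolding unit_cube_def by auto
    note b = this
    have h1: "(\<forall>i<n. y i = 0) \<Longrightarrow> (\<forall>i<n. x i = 0)"
      using le b by force
    have h2: "(\<forall>i<n. x i = 1) \<Longrightarrow> (\<forall>i<n. y i = 1)"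
      using le b by force
    show ?thesis using V[OF x] V[OF y] h1 h2 assms by auto
  qed
  show ?thesis unfolding aggregation_function_def
    using V c0 c1 mono assms ex by (auto simp: V[OF c0] V[OF c1])
qed

end
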